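(* Let $l$ be a positive integer and let $\alpha,\beta,\gamma,\alpha',\beta',\gamma'$ be real numbers such that $\alpha\ge 0$, $\alpha'\ge 0$, $\beta\ge 0$, $-\alpha'\le \beta'\le 0$, $\alpha+\beta+\gamma\ge 0$ and $\alpha'+\beta'+\gamma'\ge 0$. Let $T(n,k)$ be defined by $T(1,1)=1$, $T(n,k)=0$ unless $1\le k\le n$, and $$T(n,k)=(\alpha n+\beta k+\gamma)^l\,T(n-1,k)+(\alpha' n+\beta' k+\gamma')^l\,T(n-1,k-1)\qquad(n\ge 2,\ 1\le k\le n).$$ Then for every $n\ge 1$ the sequence $(T(n,k))_k$ is log-concave in $k$, i.e. $T(n,k)^2\ge T(n,k-1)T(n,k+1)$ for all $k$. *)

theory Defs
  imports Complex_Main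
begin

fun Tarr :: "nat \<Rightarrow> real \<Rightarrow> real \<Rightarrow> real \<Rightarrow> real \<Rightarrow> real \<Rightarrow> real \<Rightarrow> nat \<Rightarrow> int \<Rightarrow> real" where
  "Tarr l a b c a' b' c' 0 k = 0"
| "Tarr l a b c a' b' c' (Suc 0) k = (if k = 1 then 1 else 0)"
| "Tarr l a b c a' b' c' (Suc (Suc m)) k =
     (if 1 \<le> k \<and> k \<le> int (Suc (Suc m)) then
        (a * real (Suc (Suc m)) + b * real_of_int k + c) ^ l * Tarr l a b c a' b' c' (Suc m) k
      + (a' * real (Suc (Suc m)) + b' * real_of_int k + c') ^ l * Tarr l a b c a' b' c' (Suc m) (k - 1)
      else 0)"

end

theory Submission
  imports Defs
begin

lemma T_zero':
  "k < 1 \<or> k > int n \<Longrightarrow> Tarr l a b c a' b' c' n k = 0"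
proof -
  assume h: "k < 1 \<or> k > int n"
  consider "n = 0" | "n = Suc 0" | m where "n = Suc (Suc m)"
    by (metis not0_implies_Suc)
  then show ?thesis
  proof cases
    case 1 then show ?thesis by simp
  next
    case 2 then show ?thesis using h by auto
  next
    case 3 then show ?thesis using h by auto
  qed
qed

lemma T_rec:
  assumes "m \<ge> 1"
  shows "Tarr l a b c a' b' c' (Suc m) k =
     (a * real (Suc m) + b * real_of_int k + c) ^ l * Tarr l a b c a' b' c' m k
   + (a' * real (Suc m) + b' * real_of_int k + c') ^ l * Tarr l a b c a' b' c' m (k - 1)"
proof -
  obtain m' where m: "m = Suc m'" using assms by (cases m) auto
  show ?thesis
  proof (cases "1 \<le> k \<and> k \<le> int (Suc m)")
    case True then show ?thesis using m by simp
  next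
    case False
    then have "k < 1 \<or> k > int (Suc m)" by auto
    then have "Tarr l a b c a' b' c' m k = 0" "Tarr l a b c a' b' c' m (k-1) = 0"
      "Tarr l a b c a' b' c' (Suc m) k = 0"
      by (auto intro!: T_zero')
    then show ?thesis by simp
  qed
qed

lemma xpos:
  fixes a b c :: real
  assumes "a \<ge> 0" "b \<ge> 0" "a + b + c > 0" "m \<ge> 1" "k \<ge> 1"
  shows "a * real m + b * real_of_int k + c > 0"
proof -
  have "a * real m \<ge> a * 1" using assms by (intro mult_left_mono) auto
  moreover have "b * real_of_int k \<ge> b * 1" using assms by (intro mult_left_mono) auto
  ultimately show ?thesis using assms by linarith
qed

lemma ypos:
  fixes a' b' c' :: real
  assumes "a' \<ge> 0" "-a' \<le> b'" "b' \<le> 0" "a' + b' + c' > 0" "m \<ge> 1" "k \<le> int m"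
  shows "a' * real m + b' * real_of_int k + c' > 0"
proof -
  have "real_of_int k \<le> real m" using assms by (metis of_int_le_iff of_int_of_nat_eq)
  then have "b' * real_of_int k \<ge> b' * real m" using assms by (intro mult_left_mono_neg) auto
  moreover have "(a' + b') * real m \<ge> (a' + b') * 1" using assms by (intro mult_left_mono) auto
  ultimately show ?thesis using assms by (simp add: algebra_simps)
qed

lemma step_alg:
  fixes A B C D Xm Xk Xp Ym Yk Yp X'k X'p Y'k Y'p :: real
  assumes pos: "B > 0" "C > 0" "A \<ge> 0" "D \<ge> 0" "Xm \<ge> 0" "Xk > 0" "Xp \<ge> 0"
    "Ym \<ge> 0" "Yk > 0" "Yp \<ge> 0" "X'k \<ge> 0" "X'p \<ge> 0" "Y'k \<ge> 0" "Y'p \<ge> 0"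
  and H1: "Ym * Xk * (A * C) \<le> Yk * Xm * B^2"
  and H2: "Yk * Xp * (B * D) \<le> Yp * Xk * C^2"
  and cX: "X'p * Xm \<le> X'k * Xk"
  and cY: "Y'k * Yp \<le> Y'p * Yk"
  shows "Y'k * X'p * ((Xm*B + Ym*A) * (Xp*D + Yp*C)) \<le> Y'p * X'k * (Xk*C + Yk*B)^2"
proof -
  define TL where "TL = Xm*B + Ym*A"
  define TR where "TR = Xp*D + Yp*C"
  define TK where "TK = Xk*C + Yk*B"
  have TLn: "TL \<ge> 0" "TR \<ge> 0" "TK \<ge> 0" using pos by (auto simp: TL_def TR_def TK_def)
  have i: "Xk*C*TL \<le> Xm*B*TK"
  proof -
    have "Xk*C*TL = Xk*C*Xm*B + Ym * Xk * (A * C)" by (simp add: TL_def algebra_simps)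
    also have "\<dots> \<le> Xk*C*Xm*B + Yk * Xm * B^2" using H1 by linarith
    also have "\<dots> = Xm*B*TK" by (simp add: TK_def algebra_simps power2_eq_square)
    finally show ?thesis .
  qed
  have ii: "Yk*B*TR \<le> Yp*C*TK"
  proof -
    have "Yk*B*TR = Yk * Xp * (B * D) + Yk*B*Yp*C" by (simp add: TR_def algebra_simps)
    also have "\<dots> \<le> Yp * Xk * C^2 + Yk*B*Yp*C" using H2 by linarith
    also have "\<dots> = Yp*C*TK" by (simp add: TK_def algebra_simps power2_eq_square)
    finally show ?thesis .
  qed
  have "(Xk*C*TL) * (Yk*B*TR) \<le> (Xm*B*TK) * (Yp*C*TK)"
    using pos TLn by (intro mult_mono[OF i ii]) auto
  then have "(B*C) * (Xk*Yk*TL*TR) \<le> (B*C) * (Xm*Yp*TK^2)"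
    by (simp add: algebra_simps power2_eq_square)
  then have K: "Xk*Yk*TL*TR \<le> Xm*Yp*TK^2"
    using pos by (simp add: mult_le_cancel_left_pos)
  have c2: "(X'p * Xm) * (Y'k * Yp) \<le> (X'k * Xk) * (Y'p * Yk)"
    using pos by (intro mult_mono[OF cX cY]) auto
  have "(Xk*Yk) * (Y'k * X'p * (TL*TR)) = (Y'k * X'p) * (Xk*Yk*TL*TR)"
    by (simp add: algebra_simps)
  also have "\<dots> \<le> (Y'k * X'p) * (Xm*Yp*TK^2)"
    using K pos by (intro mult_left_mono) auto
  also have "\<dots> = ((X'p * Xm) * (Y'k * Yp)) * TK^2" by (simp add: algebra_simps)
  also have "\<dots> \<le> ((X'k * Xk) * (Y'p * Yk)) * TK^2"
    using c2 by (intro mult_right_mono) auto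
  also have "\<dots> = (Xk*Yk) * (Y'p * X'k * TK^2)" by (simp add: algebra_simps)
  finally have "(Xk*Yk) * (Y'k * X'p * (TL*TR)) \<le> (Xk*Yk) * (Y'p * X'k * TK^2)" .
  then show ?thesis using pos by (simp add: mult_le_cancel_left_pos TL_def TR_def TK_def)
qed


definition XX :: "nat \<Rightarrow> real \<Rightarrow> real \<Rightarrow> real \<Rightarrow> nat \<Rightarrow> int \<Rightarrow> real" where
  "XX l a b c m k = (a * real m + b * real_of_int k + c) ^ l"

lemma T_recX:
  assumes "m \<ge> 1"
  shows "Tarr l a b c a' b' c' (Suc m) k =
     XX l a b c (Suc m) k * Tarr l a b c a' b' c' m k
   + XX l a' b' c' (Suc m) k * Tarr l a b c a' b' c' m (k - 1)"
  using T_rec[OF assms] unfolding XX_def by simp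

lemma XXpos:
  fixes a b c :: real
  assumes "a \<ge> 0" "b \<ge> 0" "a + b + c > 0" "m \<ge> 1" "k \<ge> 1"
  shows "XX l a b c m k > 0"
  unfolding XX_def using xpos[OF assms] by simp

lemma YYpos:
  fixes a' b' c' :: real
  assumes "a' \<ge> 0" "-a' \<le> b'" "b' \<le> 0" "a' + b' + c' > 0" "m \<ge> 1" "k \<le> int m"
  shows "XX l a' b' c' m k > 0"
  unfolding XX_def using ypos[OF assms] by simp

lemma cX:
  fixes a b c :: real
  assumes "a \<ge> 0" "b \<ge> 0" "a * real (Suc m) + b * real_of_int (k - 1) + c \<ge> 0"
  shows "XX l a b c (Suc (Suc m)) (k+1) * XX l a b c (Suc m) (k-1)
      \<le> XX l a b c (Suc (Suc m)) k * XX l a b c (Suc m) k"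
proof -
  define x where "x = a * real (Suc m) + b * real_of_int k + c"
  have e1: "a * real (Suc (Suc m)) + b * real_of_int (k+1) + c = x + a + b"
    by (simp add: x_def algebra_simps)
  have e2: "a * real (Suc m) + b * real_of_int (k-1) + c = x - b"
    by (simp add: x_def algebra_simps)
  have e3: "a * real (Suc (Suc m)) + b * real_of_int k + c = x + a"
    by (simp add: x_def algebra_simps)
  have xb: "x - b \<ge> 0" using assms(3) e2 by simp
  have le: "(x + a + b) * (x - b) \<le> (x + a) * x"
  proof -
    have "(x + a + b) * (x - b) = (x + a) * x - b * b - a * b" by (simp add: algebra_simps)
    moreover have "b * b \<ge> 0" "a * b \<ge> 0" using assms by auto
    ultimately show ?thesis by linarith
  qed
  have nn: "0 \<le> (x + a + b) * (x - b)" using xb assms by simp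
  have "((x + a + b) * (x - b)) ^ l \<le> ((x + a) * x) ^ l"
    by (rule power_mono[OF le nn])
  then show ?thesis unfolding XX_def e1 e2 e3 x_def[symmetric]
    by (simp add: power_mult_distrib)
qed

lemma cY:
  fixes a' b' c' :: real
  assumes "a' \<ge> 0" "b' \<le> 0" "a' * real (Suc m) + b' * real_of_int (k + 1) + c' \<ge> 0"
  shows "XX l a' b' c' (Suc (Suc m)) k * XX l a' b' c' (Suc m) (k+1)
      \<le> XX l a' b' c' (Suc (Suc m)) (k+1) * XX l a' b' c' (Suc m) k"
proof -
  define y where "y = a' * real (Suc m) + b' * real_of_int k + c'"
  have e1: "a' * real (Suc (Suc m)) + b' * real_of_int k + c' = y + a'"
    by (simp add: y_def algebra_simps)
  have e2: "a' * real (Suc m) + b' * real_of_int (k+1) + c' = y + b'"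
    by (simp add: y_def algebra_simps)
  have e3: "a' * real (Suc (Suc m)) + b' * real_of_int (k+1) + c' = y + a' + b'"
    by (simp add: y_def algebra_simps)
  have yb: "y + b' \<ge> 0" using assms(3) e2 by simp
  have le: "(y + a') * (y + b') \<le> (y + a' + b') * y"
  proof -
    have "(y + a') * (y + b') = (y + a' + b') * y + a' * b'" by (simp add: algebra_simps)
    moreover have "a' * b' \<le> 0" using assms by (simp add: mult_nonneg_nonpos)
    ultimately show ?thesis by linarith
  qed
  have nn: "0 \<le> (y + a') * (y + b')" using yb assms by simp
  have "((y + a') * (y + b')) ^ l \<le> ((y + a' + b') * y) ^ l"
    by (rule power_mono[OF le nn])
  then show ?thesis unfolding XX_def e1 e2 e3 y_def[symmetric]
    by (simp add: power_mult_distrib)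
qed


context
  fixes l :: nat and a b c a' b' c' :: real
  assumes ha: "a \<ge> 0" and ha': "a' \<ge> 0" and hb: "b \<ge> 0"
    and hb'1: "- a' \<le> b'" and hb'2: "b' \<le> 0"
    and hs: "a + b + c > 0" and hs': "a' + b' + c' > 0"
begin

abbreviation "T \<equiv> Tarr l a b c a' b' c'"
abbreviation "X \<equiv> XX l a b c"
abbreviation "Y \<equiv> XX l a' b' c'"

lemma Xp: "m \<ge> 1 \<Longrightarrow> k \<ge> 1 \<Longrightarrow> X m k > 0"
  using XXpos[OF ha hb hs] by blast

lemma Yp: "m \<ge> 1 \<Longrightarrow> k \<le> int m \<Longrightarrow> Y m k > 0"
  using YYpos[OF ha' hb'1 hb'2 hs'] by blast

lemma T_pos_aux: "\<forall>k. T (Suc n) k \<ge> 0 \<and> (1 \<le> k \<and> k \<le> int (Suc n) \<longrightarrow> T (Suc n) k > 0)"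
proof (induction n)
  case 0
  then show ?case by auto
next
  case (Suc n)
  show ?case
  proof
    fix k
    have rec: "T (Suc (Suc n)) k = X (Suc (Suc n)) k * T (Suc n) k + Y (Suc (Suc n)) k * T (Suc n) (k - 1)"
      by (rule T_recX) simp
    show "T (Suc (Suc n)) k \<ge> 0 \<and> (1 \<le> k \<and> k \<le> int (Suc (Suc n)) \<longrightarrow> T (Suc (Suc n)) k > 0)"
    proof (cases "1 \<le> k \<and> k \<le> int (Suc (Suc n))")
      case True
      have xp: "X (Suc (Suc n)) k > 0" using True by (intro Xp) auto
      have yp: "Y (Suc (Suc n)) k > 0" using True by (intro Yp) auto
      have t1: "T (Suc n) k \<ge> 0" "T (Suc n) (k-1) \<ge> 0" using Suc.IH by auto
      have "T (Suc n) k > 0 \<or> T (Suc n) (k-1) > 0"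
      proof (cases "k \<le> int (Suc n)")
        case True then show ?thesis using Suc.IH \<open>1 \<le> k \<and> _\<close> by auto
      next
        case False
        then have "1 \<le> k - 1 \<and> k - 1 \<le> int (Suc n)" using True by auto
        then show ?thesis using Suc.IH by auto
      qed
      then have "T (Suc (Suc n)) k > 0"
        unfolding rec using xp yp t1
        by (metis add_pos_nonneg add_nonneg_pos mult_pos_pos zero_le_mult_iff less_le)
      then show ?thesis by (meson less_imp_le)
    next
      case False
      then have "T (Suc (Suc n)) k = 0" by (intro T_zero') auto
      then show ?thesis using False by (metis order_refl)
    qed
  qed
qed

lemma T_nonneg: "m \<ge> 1 \<Longrightarrow> T m k \<ge> 0"
  using T_pos_aux[of "m - 1"] by simp

lemma T_pos: "m \<ge> 1 \<Longrightarrow> 1 \<le> k \<Longrightarrow> k \<le> int m \<Longrightarrow> T m k > 0"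
  using T_pos_aux[of "m - 1"] by simp


definition C1 :: "nat \<Rightarrow> int \<Rightarrow> bool" where
  "C1 m k \<longleftrightarrow> Y (Suc m) k * X (Suc m) (k+1) * (T m (k-1) * T m (k+1))
      \<le> Y (Suc m) (k+1) * X (Suc m) k * (T m k)^2"

lemma C1_base: "C1 1 k"
proof (cases "k = 1")
  case True
  have "Y 2 2 > 0" by (intro Yp) auto
  moreover have "X 2 1 > 0" by (intro Xp) auto
  ultimately show ?thesis using True unfolding C1_def by (simp add: numeral_2_eq_2)
next
  case False
  have "T 1 (k-1) * T 1 (k+1) = 0" by simp
  moreover have "T 1 k = 0" using False by simp
  ultimately show ?thesis unfolding C1_def by simp
qed

lemma C1_step:
  assumes m: "m \<ge> 1" and IH: "\<And>k. C1 m k"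
  shows "C1 (Suc m) k"
proof (cases "T (Suc m) (k-1) * T (Suc m) (k+1) = 0")
  case True
  have "0 \<le> Y (Suc (Suc m)) (k+1) * X (Suc (Suc m)) k * (T (Suc m) k)^2"
  proof (cases "1 \<le> k \<and> k \<le> int (Suc m)")
    case True
    have "Y (Suc (Suc m)) (k+1) > 0" using True by (intro Yp) auto
    moreover have "X (Suc (Suc m)) k > 0" using True by (intro Xp) auto
    ultimately show ?thesis by simp
  next
    case False
    then have "T (Suc m) k = 0" by (intro T_zero') auto
    then show ?thesis by simp
  qed
  then show ?thesis unfolding C1_def True by simp
next
  case False
  then have n1: "T (Suc m) (k-1) \<noteq> 0" and n2: "T (Suc m) (k+1) \<noteq> 0" by auto
  have k2: "k \<ge> 2"
  proof (rule ccontr)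
    assume "\<not> k \<ge> 2"
    then have "T (Suc m) (k-1) = 0" by (intro T_zero') auto
    then show False using n1 by simp
  qed
  have km: "k \<le> int m"
  proof (rule ccontr)
    assume "\<not> k \<le> int m"
    then have "T (Suc m) (k+1) = 0" by (intro T_zero') auto
    then show False using n2 by simp
  qed
  define A where "A = T m (k-2)"
  define B where "B = T m (k-1)"
  define C where "C = T m k"
  define D where "D = T m (k+1)"
  have pos: "B > 0" "C > 0" "A \<ge> 0" "D \<ge> 0"
    unfolding A_def B_def C_def D_def using m k2 km
    by (auto intro!: T_pos T_nonneg)
  have cpos: "X (Suc m) (k-1) \<ge> 0" "X (Suc m) k > 0" "X (Suc m) (k+1) \<ge> 0"
    "Y (Suc m) (k-1) \<ge> 0" "Y (Suc m) k > 0" "Y (Suc m) (k+1) \<ge> 0"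
    "X (Suc (Suc m)) k \<ge> 0" "X (Suc (Suc m)) (k+1) \<ge> 0"
    "Y (Suc (Suc m)) k \<ge> 0" "Y (Suc (Suc m)) (k+1) \<ge> 0"
    using k2 km by (auto intro!: less_imp_le[OF Xp] less_imp_le[OF Yp] Xp Yp)
  have H1: "Y (Suc m) (k-1) * X (Suc m) k * (A * C) \<le> Y (Suc m) k * X (Suc m) (k-1) * B^2"
    using IH[of "k-1"] unfolding C1_def A_def B_def C_def
    by (simp add: algebra_simps)
  have H2: "Y (Suc m) k * X (Suc m) (k+1) * (B * D) \<le> Y (Suc m) (k+1) * X (Suc m) k * C^2"
    using IH[of k] unfolding C1_def B_def C_def D_def by simp
  have xb: "a * real (Suc m) + b * real_of_int (k - 1) + c \<ge> 0"
    using xpos[OF ha hb hs, of "Suc m" "k-1"] k2 by simp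
  have yb: "a' * real (Suc m) + b' * real_of_int (k + 1) + c' \<ge> 0"
    using ypos[OF ha' hb'1 hb'2 hs', of "Suc m" "k+1"] km by simp
  have cx: "X (Suc (Suc m)) (k+1) * X (Suc m) (k-1) \<le> X (Suc (Suc m)) k * X (Suc m) k"
    by (rule cX[OF ha hb xb])
  have cy: "Y (Suc (Suc m)) k * Y (Suc m) (k+1) \<le> Y (Suc (Suc m)) (k+1) * Y (Suc m) k"
    by (rule cY[OF ha' hb'2 yb])
  note main = step_alg[OF pos(1,2,3,4) cpos(1,2,3,4,5,6,7,8,9,10) H1 H2 cx cy]
  have r1: "T (Suc m) (k-1) = X (Suc m) (k-1) * B + Y (Suc m) (k-1) * A"
    using T_recX[OF m, of l a b c a' b' c' "k-1"] unfolding A_def B_def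
    by (simp add: algebra_simps)
  have r2: "T (Suc m) k = X (Suc m) k * C + Y (Suc m) k * B"
    using T_recX[OF m, of l a b c a' b' c' k] unfolding B_def C_def by simp
  have r3: "T (Suc m) (k+1) = X (Suc m) (k+1) * D + Y (Suc m) (k+1) * C"
    using T_recX[OF m, of l a b c a' b' c' "k+1"] unfolding C_def D_def by simp
  show ?thesis unfolding C1_def r1 r2 r3 by (rule main)
qed


lemma C1_all: "C1 (Suc n) k"
proof (induction n arbitrary: k)
  case 0
  then show ?case using C1_base by simp
next
  case (Suc n)
  then show ?case using C1_step[of "Suc n" k] by simp
qed

lemma LC_strict:
  assumes n: "n \<ge> 1"
  shows "T n (k-1) * T n (k+1) \<le> (T n k)^2"
proof (cases "1 \<le> k \<and> k \<le> int n")
  case True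
  have c: "C1 n k" using C1_all[of "n-1"] n by simp
  have yk: "Y (Suc n) (k+1) > 0" using True by (intro Yp) auto
  have xk: "X (Suc n) k > 0" using True by (intro Xp) auto
  have xb: "a * real (Suc n) + b * real_of_int k + c > 0"
    using xpos[OF ha hb hs, of "Suc n" k] True by simp
  have yb: "a' * real (Suc n) + b' * real_of_int (k+1) + c' > 0"
    using ypos[OF ha' hb'1 hb'2 hs', of "Suc n" "k+1"] True by simp
  have ymono: "Y (Suc n) (k+1) \<le> Y (Suc n) k"
    unfolding XX_def
  proof (rule power_mono)
    show "a' * real (Suc n) + b' * real_of_int (k + 1) + c' \<le> a' * real (Suc n) + b' * real_of_int k + c'"
      using hb'2 by (simp add: algebra_simps)
  qed (use yb in simp)
  have xmono: "X (Suc n) k \<le> X (Suc n) (k+1)"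
    unfolding XX_def
  proof (rule power_mono)
    show "a * real (Suc n) + b * real_of_int k + c \<le> a * real (Suc n) + b * real_of_int (k+1) + c"
      using hb by (simp add: algebra_simps)
  qed (use xb in simp)
  have tt: "T n (k-1) * T n (k+1) \<ge> 0" using n T_nonneg by simp
  have "Y (Suc n) (k+1) * X (Suc n) k * (T n (k-1) * T n (k+1))
      \<le> Y (Suc n) k * X (Suc n) (k+1) * (T n (k-1) * T n (k+1))"
    using ymono xmono tt yk xk
    by (intro mult_right_mono mult_mono) auto
  also have "\<dots> \<le> Y (Suc n) (k+1) * X (Suc n) k * (T n k)^2"
    using c unfolding C1_def .
  finally show ?thesis using yk xk by (simp add: mult_le_cancel_left_pos)
next
  case False
  then have "T n k = 0" by (intro T_zero') auto
  moreover have "T n (k-1) * T n (k+1) = 0"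
  proof (cases "k < 1")
    case True then have "T n (k-1) = 0" by (intro T_zero') auto
    then show ?thesis by simp
  next
    case False2: False
    then have "k > int n" using False by auto
    then have "T n (k+1) = 0" by (intro T_zero') auto
    then show ?thesis by simp
  qed
  ultimately show ?thesis by (metis order_refl power2_eq_square mult_zero_left)
qed

end

lemma T_cont: "isCont (\<lambda>e. Tarr l a b (c + e) a' b' (c' + e) n k) x"
proof (induction n arbitrary: k rule: less_induct)
  case (less n)
  consider "n = 0" | "n = Suc 0" | m where "n = Suc (Suc m)"
    by (metis not0_implies_Suc)
  then show ?case
  proof cases
    case 1 then show ?thesis by simp
  next
    case 2 then show ?thesis by simp
  next
    case 3
    have IH: "\<And>k. isCont (\<lambda>e. Tarr l a b (c + e) a' b' (c' + e) (Suc m) k) x"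
      using less 3 by simp
    show ?thesis
    proof (cases "1 \<le> k \<and> k \<le> int (Suc (Suc m))")
      case True
      then show ?thesis unfolding 3 using True
        by (simp del: Tarr.simps(3) add: Tarr.simps(3)[of l a b "c + _"]) (intro continuous_intros IH)
    next
      case False
      have "(\<lambda>e. Tarr l a b (c + e) a' b' (c' + e) n k) = (\<lambda>e. 0)"
        using False unfolding 3 by (intro ext T_zero') auto
      then show ?thesis by simp
    qed
  qed
qed

theorem theorem1p4:
  fixes l n :: nat and k :: int and a b c a' b' c' :: real
  assumes "l \<ge> 1"
    and "a \<ge> 0" and "a' \<ge> 0" and "b \<ge> 0"
    and "- a' \<le> b'" and "b' \<le> 0"
    and "a + b + c \<ge> 0" and "a' + b' + c' \<ge> 0"
    and "n \<ge> 1"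
  shows "(Tarr l a b c a' b' c' n k)^2 \<ge>
           Tarr l a b c a' b' c' n (k - 1) * Tarr l a b c a' b' c' n (k + 1)"
proof -
  define f where "f = (\<lambda>e. (Tarr l a b (c + e) a' b' (c' + e) n k)^2
     - Tarr l a b (c + e) a' b' (c' + e) n (k - 1) * Tarr l a b (c + e) a' b' (c' + e) n (k + 1))"
  have "isCont f 0" unfolding f_def by (intro continuous_intros T_cont)
  then have lim: "(f \<longlongrightarrow> f 0) (at_right 0)"
    unfolding isCont_def by (rule tendsto_mono[OF at_le, rotated]) auto
  have ev: "\<forall>\<^sub>F e in at_right 0. 0 \<le> f e"
  proof -
    have "\<forall>e>0. 0 \<le> f e"
    proof (intro allI impI)
      fix e :: real assume e: "e > 0"
      have "Tarr l a b (c + e) a' b' (c' + e) n (k-1) * Tarr l a b (c + e) a' b' (c' + e) n (k+1)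
          \<le> (Tarr l a b (c + e) a' b' (c' + e) n k)^2"
        by (rule LC_strict) (use assms e in auto)
      then show "0 \<le> f e" unfolding f_def by simp
    qed
    then show "\<forall>\<^sub>F e in at_right 0. 0 \<le> f e"
      using eventually_at_right_less[of "0::real"] by (auto elim: eventually_mono)
  qed
  have "0 \<le> f 0" by (rule tendsto_lowerbound[OF lim ev]) simp
  then show ?thesis unfolding f_def by simp
qed

end
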